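(* Consider the equation $$m_t+u_xu^{-3}m+(u^{-2}m)_x=0,\qquad m=u-u_{xx}.$$ For every wave speed $c>0$ and every parameter $b$ with $0<b<1$, this equation possesses smooth solitary travelling wave solutions $u=U(x-ct)$ (two of them, related by $U\leftrightarrow -U$), where $U$ is smooth, nowhere zero, $U(\xi)\to0$ as $|\xi|\to\infty$, and $U$ has a single peak with $$\max_\xi|U(\xi)|=\frac{b\sqrt{2-b^2}}{\sqrt c}.$$ These solutions satisfy the first-order ODE $U'^2=U^2\,\dfrac{b^2-1+\sqrt{1-cU^2}}{1+\sqrt{1-cU^2}}$.
   Context: A travelling wave of speed $c$ is a solution of the form $u(t,x)=U(\xi)$ with $\xi=x-ct$; for smooth $U$ the equation reduces to the third-order ODE $-c(U'-U''')+U'(U-U'')U^{-3}+((U-U'')U^{-2})'=0$. *)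

theory Defs
  imports "HOL-Analysis.Analysis"
begin

definition smooth_real :: "(real \<Rightarrow> real) \<Rightarrow> bool" where
  "smooth_real U \<longleftrightarrow> (\<forall>n x. ((deriv ^^ n) U) differentiable (at x))"

definition tw_ode :: "real \<Rightarrow> (real \<Rightarrow> real) \<Rightarrow> bool" where
  "tw_ode c U \<longleftrightarrow> (\<forall>\<xi>.
     - c * (deriv U \<xi> - (deriv ^^ 3) U \<xi>)
     + deriv U \<xi> * (U \<xi> - (deriv ^^ 2) U \<xi>) / (U \<xi>) ^ 3
     + deriv (\<lambda>s. (U s - (deriv ^^ 2) U s) / (U s) ^ 2) \<xi> = 0)"

definition first_order_ode :: "real \<Rightarrow> real \<Rightarrow> (real \<Rightarrow> real) \<Rightarrow> bool" where
  "first_order_ode c b U \<longleftrightarrow> (\<forall>\<xi>.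
     (deriv U \<xi>) ^ 2 = (U \<xi>) ^ 2 * (b ^ 2 - 1 + sqrt (1 - c * (U \<xi>) ^ 2))
                                     / (1 + sqrt (1 - c * (U \<xi>) ^ 2)))"

definition solitary_wave :: "real \<Rightarrow> real \<Rightarrow> (real \<Rightarrow> real) \<Rightarrow> bool" where
  "solitary_wave c b U \<longleftrightarrow>
     smooth_real U
   \<and> (\<forall>\<xi>. U \<xi> \<noteq> 0)
   \<and> (U \<longlongrightarrow> 0) at_top \<and> (U \<longlongrightarrow> 0) at_bot
   \<and> (\<exists>\<xi>0. (\<forall>s t. s < t \<and> t \<le> \<xi>0 \<longrightarrow> \<bar>U s\<bar> < \<bar>U t\<bar>)
          \<and> (\<forall>s t. \<xi>0 \<le> s \<and> s < t \<longrightarrow> \<bar>U t\<bar> < \<bar>U s\<bar>)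
          \<and> \<bar>U \<xi>0\<bar> = b * sqrt (2 - b ^ 2) / sqrt c
          \<and> (\<forall>\<xi>. \<bar>U \<xi>\<bar> \<le> \<bar>U \<xi>0\<bar>))
   \<and> tw_ode c U
   \<and> first_order_ode c b U"

end

theory Submission
  imports Defs
begin


fun Cn :: "nat \<Rightarrow> (real \<Rightarrow> real) \<Rightarrow> bool" where
  "Cn 0 f = (\<forall>x. f differentiable (at x))"
| "Cn (Suc n) f = ((\<forall>x. f differentiable (at x)) \<and> Cn n (deriv f))"

lemma Cn_iff: "Cn n f \<longleftrightarrow> (\<forall>m\<le>n. \<forall>x. ((deriv ^^ m) f) differentiable (at x))"
proof (induction n arbitrary: f)
  case 0 then show ?case by simp
next
  case (Suc n)
  have "(\<forall>m\<le>Suc n. \<forall>x. (deriv ^^ m) f differentiable at x) \<longleftrightarrow>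
        (\<forall>x. f differentiable at x) \<and> (\<forall>m\<le>n. \<forall>x. (deriv ^^ Suc m) f differentiable at x)"
    by (metis Suc_le_mono funpow_0 not0_implies_Suc zero_le)
  also have "\<dots> \<longleftrightarrow> (\<forall>x. f differentiable at x) \<and> (\<forall>m\<le>n. \<forall>x. (deriv ^^ m) (deriv f) differentiable at x)"
    by (simp only: funpow_Suc_right comp_def)
  finally show ?case using Suc by simp
qed

lemma smooth_Cn: "smooth_real f \<longleftrightarrow> (\<forall>n. Cn n f)"
  unfolding smooth_real_def Cn_iff by blast

lemma Cn_diff: "Cn n f \<Longrightarrow> f differentiable (at x)"
  by (cases n) auto

lemma Cn_DERIV: "Cn n f \<Longrightarrow> DERIV f x :> deriv f x"
  using Cn_diff DERIV_deriv_iff_real_differentiable by blast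

lemma Cn_Suc_mono: "Cn (Suc n) f \<Longrightarrow> Cn n f"
proof (induction n arbitrary: f)
  case 0 then show ?case by simp
next
  case (Suc n) then show ?case by simp
qed

lemma Cn_const: "Cn n (\<lambda>x. a)"
proof (induction n arbitrary: a)
  case 0 then show ?case by simp
next
  case (Suc n)
  have "deriv (\<lambda>x. a) = (\<lambda>x. 0)" by (rule ext, rule DERIV_imp_deriv, rule DERIV_const)
  then show ?case using Suc by simp
qed

lemma Cn_id: "Cn n (\<lambda>x. x)"
proof (cases n)
  case 0 then show ?thesis by simp
next
  case (Suc m)
  have "deriv (\<lambda>x. x) = (\<lambda>x. 1)" by (rule ext, rule DERIV_imp_deriv, rule DERIV_ident)
  then show ?thesis using Suc Cn_const by simp
qed

lemma Cn_add: "Cn n f \<Longrightarrow> Cn n g \<Longrightarrow> Cn n (\<lambda>x. f x + g x)"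
proof (induction n arbitrary: f g)
  case 0 then show ?case by simp
next
  case (Suc n)
  have "deriv (\<lambda>x. f x + g x) = (\<lambda>x. deriv f x + deriv g x)"
    by (rule ext, rule DERIV_imp_deriv) (intro DERIV_add Cn_DERIV[OF Suc.prems(1)] Cn_DERIV[OF Suc.prems(2)])
  then show ?case using Suc by simp
qed

lemma Cn_mult: "Cn n f \<Longrightarrow> Cn n g \<Longrightarrow> Cn n (\<lambda>x. f x * g x)"
proof (induction n arbitrary: f g)
  case 0 then show ?case by simp
next
  case (Suc n)
  have "deriv (\<lambda>x. f x * g x) = (\<lambda>x. deriv f x * g x + f x * deriv g x)"
    by (rule ext, rule DERIV_imp_deriv) (use DERIV_mult'[OF Cn_DERIV[OF Suc.prems(1)] Cn_DERIV[OF Suc.prems(2)]] in \<open>simp add: algebra_simps\<close>)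
  moreover have "Cn n (\<lambda>x. deriv f x * g x + f x * deriv g x)"
    using Suc by (intro Cn_add Suc.IH) (auto intro: Cn_Suc_mono)
  ultimately show ?case using Suc by simp
qed

lemma inv_DERIV: fixes f :: "real \<Rightarrow> real" shows "(\<And>x. f differentiable (at x)) \<Longrightarrow> f x \<noteq> 0 \<Longrightarrow>
   DERIV (\<lambda>x. 1 / f x) x :> (- deriv f x) * (1 / f x) * (1 / f x)"
proof -
  assume a: "\<And>x. f differentiable (at x)" "f x \<noteq> 0"
  have "DERIV f x :> deriv f x" using a(1)[of x] DERIV_deriv_iff_real_differentiable by blast
  from DERIV_inverse_fun[OF this a(2)] show ?thesis
    by (simp add: divide_inverse power2_eq_square mult.assoc)
qed

lemma Cn_inv: "Cn n f \<Longrightarrow> (\<And>x. f x \<noteq> 0) \<Longrightarrow> Cn n (\<lambda>x. 1 / f x)"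
proof (induction n arbitrary: f)
  case 0 then show ?case using inv_DERIV[of f] real_differentiable_def by auto
next
  case (Suc n)
  have d: "\<And>x. DERIV (\<lambda>x. 1 / f x) x :> (- deriv f x) * (1 / f x) * (1 / f x)"
    using Suc.prems by (intro inv_DERIV) auto
  have "deriv (\<lambda>x. 1 / f x) = (\<lambda>x. (- deriv f x) * (1 / f x) * (1 / f x))"
    by (rule ext, rule DERIV_imp_deriv, rule d)
  moreover have "Cn n (\<lambda>x. (- deriv f x) * (1 / f x) * (1 / f x))"
  proof -
    have "Cn n (\<lambda>x. 1 / f x)" using Suc by (intro Suc.IH) (auto intro: Cn_Suc_mono)
    moreover have "Cn n (\<lambda>x. - deriv f x)"
      using Cn_mult[OF Cn_const[of n "-1"], of "deriv f"] Suc by simp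
    ultimately show ?thesis by (intro Cn_mult)
  qed
  moreover have "\<forall>x. (\<lambda>x. 1 / f x) differentiable at x"
    using d real_differentiable_def by blast
  ultimately show ?case by simp
qed

lemma Cn_sinh_cosh: "Cn n sinh \<and> Cn n cosh"
proof (induction n)
  case 0 then show ?case by (auto intro!: derivative_intros simp: real_differentiable_def)
next
  case (Suc n)
  have "deriv (sinh::real\<Rightarrow>real) = cosh" "deriv (cosh::real\<Rightarrow>real) = sinh"
    by (rule ext, rule DERIV_imp_deriv, auto intro!: derivative_eq_intros)+
  moreover have "\<forall>x::real. sinh differentiable at x"
  proof
    fix x :: real have "DERIV sinh x :> cosh x" by (auto intro!: derivative_eq_intros)
    then show "sinh differentiable at x" using real_differentiable_def by blast
  qed
  moreover have "\<forall>x::real. cosh differentiable at x"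
  proof
    fix x :: real have "DERIV cosh x :> sinh x" by (auto intro!: derivative_eq_intros)
    then show "cosh differentiable at x" using real_differentiable_def by blast
  qed
  ultimately show ?case using Suc by simp
qed

definition "smooth f \<longleftrightarrow> (\<forall>n. Cn n f)"

lemma smooth_const[intro]: "smooth (\<lambda>x. a)" by (simp add: smooth_def Cn_const)
lemma smooth_id[intro]: "smooth (\<lambda>x. x)" by (simp add: smooth_def Cn_id)
lemma smooth_sinh[intro]: "smooth sinh" by (simp add: smooth_def Cn_sinh_cosh)
lemma smooth_cosh[intro]: "smooth cosh" by (simp add: smooth_def Cn_sinh_cosh)
lemma smooth_add[intro]: "smooth f \<Longrightarrow> smooth g \<Longrightarrow> smooth (\<lambda>x. f x + g x)" by (simp add: smooth_def Cn_add)
lemma smooth_mult[intro]: "smooth f \<Longrightarrow> smooth g \<Longrightarrow> smooth (\<lambda>x. f x * g x)" by (simp add: smooth_def Cn_mult)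
lemma smooth_minus[intro]: "smooth f \<Longrightarrow> smooth (\<lambda>x. - f x)"
  using smooth_mult[OF smooth_const[of "-1"], of f] by simp
lemma smooth_diff[intro]: "smooth f \<Longrightarrow> smooth g \<Longrightarrow> smooth (\<lambda>x. f x - g x)"
  using smooth_add[of f "\<lambda>x. - g x"] smooth_minus[of g] by simp
lemma smooth_pow2[intro]: "smooth f \<Longrightarrow> smooth (\<lambda>x. f x ^ 2)"
  using smooth_mult[of f f] by (simp add: power2_eq_square)
lemma smooth_divide[intro]: "smooth f \<Longrightarrow> smooth g \<Longrightarrow> (\<And>x. g x \<noteq> 0) \<Longrightarrow> smooth (\<lambda>x. f x / g x)"
  using smooth_mult[of f "\<lambda>x. 1 / g x"] by (simp add: smooth_def Cn_inv)
lemma smooth_deriv: "smooth f \<Longrightarrow> smooth (deriv f)"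
  by (metis Cn.simps(2) smooth_def)
lemma smooth_DERIV: "smooth f \<Longrightarrow> DERIV f x :> deriv f x"
  using Cn_DERIV smooth_def by blast




lemma cosh_gt_abs_sinh: "\<bar>sinh (t::real)\<bar> < cosh t"
proof -
  have "cosh t ^ 2 = sinh t ^ 2 + 1" by (rule cosh_square_eq)
  then have "\<bar>sinh t\<bar> ^ 2 < cosh t ^ 2" by simp
  then show ?thesis by (rule power_less_imp_less_base) simp
qed

lemma aux_frac: fixes a d k x y :: real
  assumes "a > 0" "d > 0" "k > 0" "y*a - x*d = -2*k"
  shows "1/k - x/a + y/d = (a*d - 2*k^2)/(k*(a*d))"
proof -
  have "1/k - x/a + y/d = 1/k + (y*a - x*d)/(a*d)" using assms by (simp add: field_simps)
  also have "\<dots> = 1/k - 2*k/(a*d)" using assms(4) by simp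
  also have "\<dots> = (a*d - 2*k^2)/(k*(a*d))" using assms by (simp add: field_simps power2_eq_square)
  finally show ?thesis .
qed

locale wave =
  fixes c k A b :: real
  assumes c: "c > 0" and k: "0 < k" "k^2 < 1/2" and A: "A > 0"
    and cA: "c * A^2 = 4*k^2*(1-k^2)" and bk: "b^2 = 2*k^2"
begin

definition "K = 1 - k^2"
definition "E t = 1 + K * sinh t ^ 2"
definition "F t = 1 - 2*k^2 + K * sinh t ^ 2"
definition "P t = A * cosh t / E t"
definition "Xi t = t / k - ln (cosh t + k * sinh t) + ln (cosh t - k * sinh t)"
definition "R t = k * E t / F t"
definition "Dop \<phi> = (\<lambda>t. deriv \<phi> t * R t)"

lemma K_pos: "K > 0" using k unfolding K_def by simp
lemma k_lt1: "k < 1"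
proof -
  have "k^2 < 1" using k by simp
  then show ?thesis using k by (simp add: abs_square_less_1)
qed
lemma E_ge1: "E t \<ge> 1" using K_pos unfolding E_def by simp
lemma E_pos: "E t > 0" using E_ge1[of t] by simp
lemma F_ge: "F t \<ge> 1 - 2*k^2" using K_pos unfolding F_def by simp
lemma F_pos: "F t > 0" using F_ge[of t] k by simp
lemma F_E: "F t = E t - 2*k^2" unfolding F_def E_def by simp

lemma cpk: "cosh t + k * sinh t > 0" and cmk: "cosh t - k * sinh t > 0"
proof -
  have "\<bar>k * sinh t\<bar> \<le> \<bar>sinh t\<bar>" using k k_lt1 by (simp add: abs_mult mult_left_le_one_le)
  then show "cosh t + k * sinh t > 0" "cosh t - k * sinh t > 0" using cosh_gt_abs_sinh[of t] by linarith+
qed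

lemma Xi_deriv: "DERIV Xi t :> F t / (k * E t)"
proof -
  have "DERIV Xi t :> 1/k - (sinh t + k * cosh t)/(cosh t + k * sinh t) + (sinh t - k * cosh t)/(cosh t - k * sinh t)"
    unfolding Xi_def[abs_def] using cpk[of t] cmk[of t] k
    apply (intro derivative_eq_intros)
    apply (auto simp: cpk cmk)
    done
  moreover have "1/k - (sinh t + k * cosh t)/(cosh t + k * sinh t) + (sinh t - k * cosh t)/(cosh t - k * sinh t)
     = F t / (k * E t)"
  proof -
    have ee: "E t = (cosh t + k * sinh t) * (cosh t - k * sinh t)"
      unfolding E_def K_def using cosh_square_eq[of t] by algebra
    have "(sinh t - k * cosh t) * (cosh t + k * sinh t) - (sinh t + k * cosh t) * (cosh t - k * sinh t) = -2*k"
      using cosh_square_eq[of t] by algebra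
    then show ?thesis using cpk[of t] cmk[of t] k unfolding F_E ee
      by (intro aux_frac) auto
  qed
  ultimately show ?thesis by simp
qed


definition "m0 = (1 - 2*k^2) / k"
lemma m0_pos: "m0 > 0" using k unfolding m0_def by simp

lemma Xd_ge: "F t / (k * E t) \<ge> m0"
proof -
  have e: "F t / (k * E t) = 1/k - 2*k / E t" using k E_pos[of t] unfolding F_E
    by (simp add: field_simps power2_eq_square)
  have "2*k / E t \<le> 2*k" using E_ge1[of t] k by (simp add: divide_le_eq)
  then have "1/k - 2*k \<le> F t / (k * E t)" unfolding e by simp
  moreover have "1/k - 2*k = m0" unfolding m0_def using k by (simp add: field_simps power2_eq_square)
  ultimately show ?thesis by simp
qed

lemma Xd_pos: "F t / (k * E t) > 0" using Xd_ge[of t] m0_pos by simp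

lemma Xi_0: "Xi 0 = 0" unfolding Xi_def by simp

lemma Xi_cont: "isCont Xi t" using Xi_deriv DERIV_isCont by blast

lemma Xi_mono: "s < t \<Longrightarrow> Xi s < Xi t"
  by (rule DERIV_pos_imp_increasing) (use Xi_deriv Xd_pos in blast)+

lemma Xi_ge: "t \<ge> 0 \<Longrightarrow> Xi t \<ge> m0 * t"
proof -
  assume t: "t \<ge> 0"
  have "(\<lambda>x. Xi x - m0 * x) 0 \<le> (\<lambda>x. Xi x - m0 * x) t"
  proof (rule DERIV_nonneg_imp_nondecreasing[OF t])
    fix x
    have "DERIV (\<lambda>x. Xi x - m0 * x) x :> F x / (k * E x) - m0"
      by (rule derivative_eq_intros Xi_deriv refl | simp)+
    then show "\<exists>y. DERIV (\<lambda>x. Xi x - m0 * x) x :> y \<and> y \<ge> 0" using Xd_ge[of x] by auto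
  qed
  then show ?thesis using Xi_0 by simp
qed

lemma Xi_le: "t \<le> 0 \<Longrightarrow> Xi t \<le> m0 * t"
proof -
  assume t: "t \<le> 0"
  have "(\<lambda>x. Xi x - m0 * x) t \<le> (\<lambda>x. Xi x - m0 * x) 0"
  proof (rule DERIV_nonneg_imp_nondecreasing[OF t])
    fix x
    have "DERIV (\<lambda>x. Xi x - m0 * x) x :> F x / (k * E x) - m0"
      by (rule derivative_eq_intros Xi_deriv refl | simp)+
    then show "\<exists>y. DERIV (\<lambda>x. Xi x - m0 * x) x :> y \<and> y \<ge> 0" using Xd_ge[of x] by auto
  qed
  then show ?thesis using Xi_0 by simp
qed

lemma Xi_surj: "\<exists>t. Xi t = y"
proof (cases "y \<ge> 0")
  case True
  have "Xi 0 \<le> y" using True Xi_0 by simp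
  moreover have "y \<le> Xi (y / m0)" using Xi_ge[of "y/m0"] True m0_pos by simp
  ultimately show ?thesis using IVT[of Xi 0 y "y/m0"] True m0_pos Xi_cont by auto
next
  case False
  have "y \<le> Xi 0" using False Xi_0 by simp
  moreover have "Xi (y / m0) \<le> y" using Xi_le[of "y/m0"] False m0_pos by (simp add: divide_nonpos_pos)
  ultimately show ?thesis using IVT[of Xi "y/m0" y 0] False m0_pos Xi_cont by (auto simp: divide_nonpos_pos)
qed

lemma Xi_inj: "Xi s = Xi t \<Longrightarrow> s = t"
  by (metis Xi_mono less_irrefl linorder_neqE_linordered_idom)

definition "h = inv Xi"

lemma Xi_h: "Xi (h y) = y"
  unfolding h_def by (metis Xi_surj f_inv_into_f rangeI)

lemma h_Xi: "h (Xi t) = t"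
  using Xi_h Xi_inj by blast

lemma h_mono: "s < t \<Longrightarrow> h s < h t"
  by (metis Xi_h Xi_mono less_irrefl linorder_neqE_linordered_idom less_trans)

lemma h_cont: "isCont h y"
proof -
  have "isCont h (Xi (h y))"
    by (rule isCont_inverse_function[where d=1]) (auto simp: h_Xi Xi_cont)
  then show ?thesis by (simp add: Xi_h)
qed

lemma h_deriv: "DERIV h y :> R (h y)"
proof -
  have "DERIV h y :> inverse (F (h y) / (k * E (h y)))"
    by (rule DERIV_inverse_function[where f=Xi and g=h and x=y and a="y - 1" and b="y + 1"])
       (use Xi_deriv Xd_pos h_cont Xi_h F_pos E_pos in \<open>auto simp: less_imp_neq[symmetric]\<close>)
  then show ?thesis unfolding R_def by simp
qed

lemma E_smooth: "smooth E" unfolding E_def[abs_def] by (intro smooth_add smooth_mult smooth_pow2 smooth_const smooth_sinh)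
lemma F_smooth: "smooth F" unfolding F_def[abs_def] by (intro smooth_add smooth_mult smooth_pow2 smooth_const smooth_sinh)
lemma R_smooth: "smooth R" unfolding R_def[abs_def]
  by (intro smooth_divide smooth_mult smooth_const E_smooth F_smooth) (use F_pos in \<open>simp add: less_imp_neq[symmetric]\<close>)

lemma Dop_smooth: "smooth \<psi> \<Longrightarrow> smooth (Dop \<psi>)"
  unfolding Dop_def by (intro smooth_mult smooth_deriv R_smooth)

lemma chain_DERIV: "smooth \<psi> \<Longrightarrow> DERIV (\<lambda>\<xi>. \<psi> (h \<xi>)) \<xi> :> Dop \<psi> (h \<xi>)"
  unfolding Dop_def using DERIV_chain2[OF smooth_DERIV h_deriv] by simp

lemma chain_deriv: "smooth \<psi> \<Longrightarrow> deriv (\<lambda>\<xi>. \<psi> (h \<xi>)) = (\<lambda>\<xi>. Dop \<psi> (h \<xi>))"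
  by (rule ext, rule DERIV_imp_deriv, rule chain_DERIV)

lemma higher: "smooth \<psi> \<Longrightarrow> smooth ((Dop ^^ n) \<psi>) \<and> (deriv ^^ n) (\<lambda>\<xi>. \<psi> (h \<xi>)) = (\<lambda>\<xi>. (Dop ^^ n) \<psi> (h \<xi>))"
proof (induction n)
  case 0 then show ?case by simp
next
  case (Suc n)
  then show ?case by (simp add: Dop_smooth chain_deriv)
qed

lemma comp_smooth_real: "smooth \<psi> \<Longrightarrow> smooth_real (\<lambda>\<xi>. \<psi> (h \<xi>))"
  unfolding smooth_real_def
proof (intro allI)
  fix n x assume s: "smooth \<psi>"
  have "DERIV (\<lambda>\<xi>. (Dop ^^ n) \<psi> (h \<xi>)) x :> Dop ((Dop ^^ n) \<psi>) (h x)"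
    using higher[OF s] by (intro chain_DERIV) auto
  then show "(deriv ^^ n) (\<lambda>\<xi>. \<psi> (h \<xi>)) differentiable at x"
    using higher[OF s, of n] real_differentiable_def by auto
qed


definition "DPx t = - (A * k * sinh t / E t)"
definition "M t = A * K * cosh t / F t"

lemma C2: "cosh (t::real) ^ 2 = 1 + sinh t ^ 2" using cosh_square_eq[of t] by simp
lemma EKC: "E t - 2 * K * cosh t ^ 2 = - F t" unfolding E_def F_def K_def C2 by (simp add: algebra_simps)
lemma FKC: "F t - 2 * K * cosh t ^ 2 = - E t" unfolding E_def F_def K_def C2 by (simp add: algebra_simps)
lemma EKs: "E t - 2 * K * sinh t ^ 2 = 1 - K * sinh t ^ 2" unfolding E_def by (simp add: algebra_simps)
lemma FKE: "F t - K * E t = - (k^2 * (1 - K * sinh t ^ 2))" unfolding E_def F_def K_def by (simp add: algebra_simps power2_eq_square)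
lemma E_Fne: "E t \<noteq> 0" "F t \<noteq> 0" using E_pos[of t] F_pos[of t] by auto

lemma E_DERIV: "DERIV E t :> 2 * K * sinh t * cosh t"
  unfolding E_def[abs_def] by (rule derivative_eq_intros refl | simp)+
lemma F_DERIV: "DERIV F t :> 2 * K * sinh t * cosh t"
  unfolding F_def[abs_def] by (rule derivative_eq_intros refl | simp)+

lemma P_DERIV: "DERIV P t :> A * (sinh t * E t - cosh t * (2 * K * sinh t * cosh t)) / E t ^ 2"
  unfolding P_def[abs_def] by (rule derivative_eq_intros refl E_DERIV | simp add: E_Fne power2_eq_square algebra_simps)+
lemma DPx_DERIV: "DERIV DPx t :> - (A * k * (cosh t * E t - sinh t * (2 * K * sinh t * cosh t)) / E t ^ 2)"
  unfolding DPx_def[abs_def] by (rule derivative_eq_intros refl E_DERIV | simp add: E_Fne power2_eq_square algebra_simps)+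
lemma M_DERIV: "DERIV M t :> A * K * (sinh t * F t - cosh t * (2 * K * sinh t * cosh t)) / F t ^ 2"
  unfolding M_def[abs_def] by (rule derivative_eq_intros refl F_DERIV | simp add: E_Fne power2_eq_square algebra_simps)+

lemma P_smooth: "smooth P" unfolding P_def[abs_def]
  by (intro smooth_divide smooth_mult smooth_const smooth_cosh E_smooth) (simp add: E_Fne)
lemma DPx_smooth: "smooth DPx" unfolding DPx_def[abs_def]
  by (intro smooth_minus smooth_divide smooth_mult smooth_const smooth_sinh E_smooth) (simp add: E_Fne)
lemma M_smooth: "smooth M" unfolding M_def[abs_def]
  by (intro smooth_divide smooth_mult smooth_const smooth_cosh F_smooth) (simp add: E_Fne)

lemma Dop_P: "Dop P = DPx"
proof (rule ext)
  fix t
  have "Dop P t = A * (sinh t * (E t - 2 * K * cosh t ^ 2)) / E t ^ 2 * (k * E t / F t)"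
    unfolding Dop_def R_def DERIV_imp_deriv[OF P_DERIV] by (simp add: algebra_simps power2_eq_square)
  also have "\<dots> = DPx t" unfolding EKC DPx_def using E_Fne[of t]
    by (simp add: field_simps power2_eq_square)
  finally show "Dop P t = DPx t" .
qed

lemma Dop_DPx: "Dop DPx = (\<lambda>t. P t - M t)"
proof (rule ext)
  fix t
  have "Dop DPx t = - (A * k * (cosh t * (E t - 2 * K * sinh t ^ 2)) / E t ^ 2) * (k * E t / F t)"
    unfolding Dop_def R_def DERIV_imp_deriv[OF DPx_DERIV] by (simp add: algebra_simps power2_eq_square)
  also have "\<dots> = - (A * k^2 * cosh t * (1 - K * sinh t ^ 2)) / (E t * F t)" unfolding EKs using E_Fne[of t]
    by (simp add: field_simps power2_eq_square)
  also have "\<dots> = A * cosh t * (F t - K * E t) / (E t * F t)" unfolding FKE by (simp add: algebra_simps)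
  also have "\<dots> = P t - M t" unfolding P_def M_def using E_Fne[of t] by (simp add: field_simps)
  finally show "Dop DPx t = P t - M t" .
qed

lemma M_deriv: "deriv M t = - (A * K * sinh t * E t / F t ^ 2)"
proof -
  have "deriv M t = A * K * (sinh t * (F t - 2 * K * cosh t ^ 2)) / F t ^ 2"
    unfolding DERIV_imp_deriv[OF M_DERIV] by (simp add: algebra_simps power2_eq_square)
  also have "\<dots> = - (A * K * sinh t * E t / F t ^ 2)" unfolding FKC by simp
  finally show ?thesis .
qed


lemma P_pos: "P t > 0" unfolding P_def using A E_pos[of t] by simp
lemma P_0: "P 0 = A" unfolding P_def E_def by simp

lemma P_deriv: "deriv P t = - (A * sinh t * F t / E t ^ 2)"
proof -
  have "deriv P t = A * (sinh t * (E t - 2 * K * cosh t ^ 2)) / E t ^ 2"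
    unfolding DERIV_imp_deriv[OF P_DERIV] by (simp add: algebra_simps power2_eq_square)
  also have "\<dots> = - (A * sinh t * F t / E t ^ 2)" unfolding EKC by simp
  finally show ?thesis .
qed


lemma P_incr: assumes ab: "u < v" "v \<le> 0" shows "P u < P v"
proof (rule DERIV_pos_imp_increasing_open[OF ab(1)])
  fix x assume "u < x" "x < v"
  then have "x < 0" using ab by simp
  then have "A * (- sinh x) * F x / E x ^ 2 > 0" using A F_pos[of x] E_pos[of x]
    by (intro divide_pos_pos mult_pos_pos) auto
  then have "deriv P x > 0" unfolding P_deriv by simp
  then show "\<exists>y. DERIV P x :> y \<and> y > 0" using smooth_DERIV[OF P_smooth] by blast
next
  show "continuous_on {u..v} P" using smooth_DERIV[OF P_smooth] DERIV_isCont
    by (intro continuous_at_imp_continuous_on) blast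
qed


lemma P_cont: "continuous_on S P" using smooth_DERIV[OF P_smooth] DERIV_isCont
    by (intro continuous_at_imp_continuous_on) blast

lemma P_decr: assumes ab: "0 \<le> u" "u < v" shows "P v < P u"
proof -
  have "(\<lambda>x. - P x) u < (\<lambda>x. - P x) v"
  proof (rule DERIV_pos_imp_increasing_open[OF ab(2)])
    fix x assume "u < x" "x < v"
    then have "x > 0" using ab by simp
    then have "A * sinh x * F x / E x ^ 2 > 0" using A F_pos[of x] E_pos[of x]
      by (intro divide_pos_pos mult_pos_pos) auto
    then have "- deriv P x > 0" unfolding P_deriv by simp
    moreover have "DERIV (\<lambda>x. - P x) x :> - deriv P x" by (rule DERIV_minus[OF smooth_DERIV[OF P_smooth]])
    ultimately show "\<exists>y. DERIV (\<lambda>x. - P x) x :> y \<and> y > 0" by blast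
  next
    show "continuous_on {u..v} (\<lambda>x. - P x)" by (rule continuous_on_minus[OF P_cont])
  qed
  then show ?thesis by simp
qed

lemma P_le: "P t \<le> A"
proof -
  have "P t \<le> P 0"
    using P_incr[of t 0] P_decr[of 0 t] by (cases t "0::real" rule: linorder_cases) auto
  then show ?thesis using P_0 by simp
qed

lemma P_bound: "P t \<le> (A / K) * inverse (cosh t)"
proof -
  have "K * cosh t ^ 2 \<le> E t" unfolding E_def C2 K_def by (simp add: algebra_simps)
  moreover have "K * cosh t ^ 2 > 0" using K_pos by simp
  ultimately have "A * cosh t / E t \<le> A * cosh t / (K * cosh t ^ 2)"
    using A by (intro frac_le) auto
  also have "\<dots> = (A / K) * inverse (cosh t)" using K_pos by (simp add: field_simps power2_eq_square)
  finally show ?thesis unfolding P_def .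
qed


lemma P_lim_top: "(P \<longlongrightarrow> 0) at_top" and P_lim_bot: "(P \<longlongrightarrow> 0) at_bot"
proof -
  have 1: "((\<lambda>t. (A / K) * inverse (cosh t)) \<longlongrightarrow> 0) at_top"
    using tendsto_mult[OF tendsto_const tendsto_inverse_0_at_top[OF cosh_real_at_top], of "A/K"] by simp
  have 2: "((\<lambda>t. (A / K) * inverse (cosh t)) \<longlongrightarrow> 0) at_bot"
    using tendsto_mult[OF tendsto_const tendsto_inverse_0_at_top[OF cosh_real_at_bot], of "A/K"] by simp
  show "(P \<longlongrightarrow> 0) at_top"
    by (rule tendsto_sandwich[OF _ _ tendsto_const 1]) (use P_pos P_bound less_imp_le in \<open>auto intro!: always_eventually simp del: divide_inverse\<close>)
  show "(P \<longlongrightarrow> 0) at_bot"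
    by (rule tendsto_sandwich[OF _ _ tendsto_const 2]) (use P_pos P_bound less_imp_le in \<open>auto intro!: always_eventually simp del: divide_inverse\<close>)
qed


lemma h_le: "s \<le> t \<Longrightarrow> h s \<le> h t" using h_mono by (cases "s = t") (auto simp: le_less)

lemma h_top: "filterlim h at_top at_top"
  unfolding filterlim_at_top eventually_at_top_linorder
proof
  fix Z show "\<exists>N. \<forall>n\<ge>N. Z \<le> h n"
    by (rule exI[of _ "Xi Z"]) (use h_le h_Xi in metis)
qed
lemma h_bot: "filterlim h at_bot at_bot"
  unfolding filterlim_at_bot eventually_at_bot_linorder
proof
  fix Z show "\<exists>N. \<forall>n\<le>N. h n \<le> Z"
    by (rule exI[of _ "Xi Z"]) (use h_le h_Xi in metis)
qed
lemma h_0: "h 0 = 0" using h_Xi[of 0] Xi_0 by simp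


lemma W2: "(F t / E t) ^ 2 = 1 - c * P t ^ 2"
proof -
  have "E t ^ 2 - F t ^ 2 = 4 * k^2 * K * cosh t ^ 2"
  proof -
    have "E t ^ 2 - F t ^ 2 = (E t - F t) * (E t + F t)" by (simp add: algebra_simps power2_eq_square)
    also have "E t + F t = 2 * K * cosh t ^ 2" unfolding E_def F_def K_def C2 by (simp add: algebra_simps)
    also have "E t - F t = 2 * k^2" unfolding F_E by simp
    finally show ?thesis by simp
  qed
  moreover have "c * P t ^ 2 = 4 * k^2 * K * cosh t ^ 2 / E t ^ 2"
    unfolding P_def using cA K_def by (simp add: power_divide power_mult_distrib)
  ultimately have "c * P t ^ 2 = (E t ^ 2 - F t ^ 2) / E t ^ 2" by simp
  also have "\<dots> = 1 - (F t / E t) ^ 2" using E_Fne[of t] by (simp add: diff_divide_distrib power_divide)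
  finally show "(F t / E t)\<^sup>2 = 1 - c * (P t)\<^sup>2" by simp
qed

lemma W: "sqrt (1 - c * P t ^ 2) = F t / E t"
  by (rule real_sqrt_unique[OF W2]) (use E_pos[of t] F_pos[of t] in simp)



lemma Dop_cmult: "smooth \<phi> \<Longrightarrow> Dop (\<lambda>t. \<sigma> * \<phi> t) = (\<lambda>t. \<sigma> * Dop \<phi> t)"
  unfolding Dop_def by (rule ext) (simp add: DERIV_imp_deriv[OF DERIV_cmult[OF smooth_DERIV]])

lemma Dop_diff: "smooth \<phi> \<Longrightarrow> smooth \<psi> \<Longrightarrow> Dop (\<lambda>t. \<phi> t - \<psi> t) = (\<lambda>t. Dop \<phi> t - Dop \<psi> t)"
  unfolding Dop_def by (rule ext) (simp add: DERIV_imp_deriv[OF DERIV_diff[OF smooth_DERIV smooth_DERIV]] algebra_simps)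

lemma key: "deriv M t * (1 - c * P t ^ 2) * P t = M t * deriv P t"
  unfolding M_deriv P_deriv W2[symmetric] unfolding M_def P_def using E_Fne[of t]
  by (simp add: field_simps power2_eq_square)

lemma fo_key: "DPx t ^ 2 = P t ^ 2 * (b^2 - 1 + F t / E t) / (1 + F t / E t)"
proof -
  have EF: "E t + F t = 2 * K * cosh t ^ 2" unfolding E_def F_def K_def C2 by (simp add: algebra_simps)
  have num: "b^2 * E t - E t + F t = 2 * k^2 * K * sinh t ^ 2" unfolding bk E_def F_def K_def by (simp add: algebra_simps)
  have n1: "b^2 - 1 + F t / E t = (b^2 * E t - E t + F t) / E t" using E_Fne[of t] by (simp add: field_simps)
  have n2: "1 + F t / E t = (E t + F t) / E t" using E_Fne[of t] by (simp add: field_simps)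
  have "(b^2 - 1 + F t / E t) / (1 + F t / E t) = (b^2 * E t - E t + F t) / (E t + F t)"
    unfolding n1 n2 using E_Fne[of t] by simp
  also have "\<dots> = k^2 * sinh t ^ 2 / cosh t ^ 2" unfolding num EF using K_pos by (simp add: field_simps)
  finally have "P t ^ 2 * (b^2 - 1 + F t / E t) / (1 + F t / E t) = P t ^ 2 * (k^2 * sinh t ^ 2 / cosh t ^ 2)"
    by (metis times_divide_eq_right)
  also have "\<dots> = DPx t ^ 2" unfolding P_def DPx_def using E_Fne[of t] by (simp add: field_simps power2_eq_square)
  finally show ?thesis by simp
qed

lemma tw_alg:
  fixes \<sigma> p m md pd r :: real
  assumes s: "\<sigma> = 1 \<or> \<sigma> = -1" and P: "p \<noteq> 0" and key: "md * (1 - c * p^2) * p = m * pd"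
  shows "- c * (\<sigma> * (pd * r) - \<sigma> * (pd * r - md * r)) + \<sigma> * (pd * r) * (\<sigma> * p - \<sigma> * (p - m)) / (\<sigma> * p) ^ 3
     + \<sigma> * ((md * p ^ 2 - m * (2 * p * pd)) / (p ^ 2 * p ^ 2)) * r = 0"
proof -
  have "- c * (\<sigma> * (pd * r) - \<sigma> * (pd * r - md * r)) + \<sigma> * (pd * r) * (\<sigma> * p - \<sigma> * (p - m)) / (\<sigma> * p) ^ 3
     + \<sigma> * ((md * p ^ 2 - m * (2 * p * pd)) / (p ^ 2 * p ^ 2)) * r
     = \<sigma> * r / p ^ 3 * (md * (1 - c * p^2) * p - m * pd)"
    using s P by (auto simp: field_simps power2_eq_square power3_eq_cube)
  then show ?thesis using key by simp
qed


lemma U_wave: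
  assumes s: "\<sigma> = 1 \<or> \<sigma> = -1" and amp: "A = b * sqrt (2 - b^2) / sqrt c"
  shows "solitary_wave c b (\<lambda>\<xi>. \<sigma> * P (h \<xi>))"
proof -
  define \<psi> where "\<psi> = (\<lambda>t. \<sigma> * P t)"
  define U where "U = (\<lambda>\<xi>. \<sigma> * P (h \<xi>))"
  have U\<psi>: "U = (\<lambda>\<xi>. \<psi> (h \<xi>))" unfolding U_def \<psi>_def by simp
  have s2: "\<sigma>^2 = 1" "\<bar>\<sigma>\<bar> = 1" using s by auto
  have sm\<psi>: "smooth \<psi>" unfolding \<psi>_def by (intro smooth_mult smooth_const P_smooth)
  have sPM: "smooth (\<lambda>t. P t - M t)" by (intro smooth_diff P_smooth M_smooth)
  have o1: "Dop \<psi> = (\<lambda>t. \<sigma> * DPx t)" unfolding \<psi>_def Dop_cmult[OF P_smooth] Dop_P by simp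
  have o2: "(Dop ^^ 2) \<psi> = (\<lambda>t. \<sigma> * (P t - M t))"
    using o1 Dop_cmult[OF DPx_smooth] Dop_DPx by (simp add: numeral_2_eq_2)
  have o3: "(Dop ^^ 3) \<psi> = (\<lambda>t. \<sigma> * (DPx t - Dop M t))"
    using o2 Dop_cmult[OF sPM] Dop_diff[OF P_smooth M_smooth] Dop_P by (simp add: numeral_3_eq_3 numeral_2_eq_2)
  have d1: "deriv U = (\<lambda>\<xi>. \<sigma> * DPx (h \<xi>))" using higher[OF sm\<psi>, of 1] o1 U\<psi> by simp
  have d2: "(deriv ^^ 2) U = (\<lambda>\<xi>. \<sigma> * (P (h \<xi>) - M (h \<xi>)))" using higher[OF sm\<psi>, of 2] o2 U\<psi> by simp
  have d3: "(deriv ^^ 3) U = (\<lambda>\<xi>. \<sigma> * (DPx (h \<xi>) - Dop M (h \<xi>)))" using higher[OF sm\<psi>, of 3] o3 U\<psi> by simp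
  have smooth: "smooth_real U" unfolding U\<psi> by (rule comp_smooth_real[OF sm\<psi>])
  have nz: "\<forall>\<xi>. U \<xi> \<noteq> 0" unfolding U_def using s P_pos by (auto simp: less_imp_neq[symmetric])
  have lt: "(U \<longlongrightarrow> 0) at_top"
    using tendsto_mult[OF tendsto_const filterlim_compose[OF P_lim_top h_top], of \<sigma>] unfolding U_def by simp
  have lb: "(U \<longlongrightarrow> 0) at_bot"
    using tendsto_mult[OF tendsto_const filterlim_compose[OF P_lim_bot h_bot], of \<sigma>] unfolding U_def by simp
  have absU: "\<bar>U \<xi>\<bar> = P (h \<xi>)" for \<xi> unfolding U_def using s2 P_pos[of "h \<xi>"] by (simp add: abs_mult)
  have peak: "\<exists>\<xi>0. (\<forall>s t. s < t \<and> t \<le> \<xi>0 \<longrightarrow> \<bar>U s\<bar> < \<bar>U t\<bar>)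
          \<and> (\<forall>s t. \<xi>0 \<le> s \<and> s < t \<longrightarrow> \<bar>U t\<bar> < \<bar>U s\<bar>)
          \<and> \<bar>U \<xi>0\<bar> = b * sqrt (2 - b ^ 2) / sqrt c
          \<and> (\<forall>\<xi>. \<bar>U \<xi>\<bar> \<le> \<bar>U \<xi>0\<bar>)"
  proof (intro exI[of _ 0] conjI allI impI)
    fix s t :: real assume "s < t \<and> t \<le> 0"
    then have "h s < h t" "h t \<le> 0" using h_mono h_le[of t 0] h_0 by auto
    then show "\<bar>U s\<bar> < \<bar>U t\<bar>" unfolding absU by (rule P_incr)
  next
    fix s t :: real assume "0 \<le> s \<and> s < t"
    then have "0 \<le> h s" "h s < h t" using h_mono h_le[of 0 s] h_0 by auto
    then show "\<bar>U t\<bar> < \<bar>U s\<bar>" unfolding absU by (rule P_decr)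
  next
    show "\<bar>U 0\<bar> = b * sqrt (2 - b ^ 2) / sqrt c" unfolding absU h_0 P_0 using amp by simp
  next
    fix \<xi> show "\<bar>U \<xi>\<bar> \<le> \<bar>U 0\<bar>" unfolding absU h_0 P_0 by (rule P_le)
  qed
  have fo: "first_order_ode c b U"
    unfolding first_order_ode_def
  proof
    fix \<xi>
    have "(\<sigma> * P (h \<xi>))^2 = P (h \<xi>)^2" "(\<sigma> * DPx (h \<xi>))^2 = DPx (h \<xi>)^2"
      using s2 by (simp_all add: power_mult_distrib)
    then show "(deriv U \<xi>)\<^sup>2 = (U \<xi>)\<^sup>2 * (b\<^sup>2 - 1 + sqrt (1 - c * (U \<xi>)\<^sup>2)) / (1 + sqrt (1 - c * (U \<xi>)\<^sup>2))"
      unfolding d1 unfolding U_def by (simp add: W fo_key)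
  qed
  have tw: "tw_ode c U"
    unfolding tw_ode_def
  proof
    fix \<xi>
    define t where "t = h \<xi>"
    define \<phi> where "\<phi> = (\<lambda>t. \<sigma> * (M t / P t ^ 2))"
    have fun_eq: "(\<lambda>s. (U s - (deriv ^^ 2) U s) / (U s) ^ 2) = (\<lambda>s. \<phi> (h s))"
      unfolding d2 unfolding U_def \<phi>_def using s2 P_pos by (auto simp: power_mult_distrib algebra_simps)
    have sm\<phi>: "smooth \<phi>" unfolding \<phi>_def
      by (intro smooth_mult smooth_const smooth_divide smooth_pow2 M_smooth P_smooth)
         (use P_pos in \<open>simp add: less_imp_neq[symmetric]\<close>)
    have d\<phi>: "DERIV \<phi> t :> \<sigma> * ((deriv M t * P t ^ 2 - M t * (2 * P t * deriv P t)) / (P t ^ 2 * P t ^ 2))"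
    proof -
      have "DERIV (\<lambda>t. P t ^ 2) t :> of_nat 2 * (deriv P t * P t ^ (2 - Suc 0))"
        by (rule DERIV_power[OF smooth_DERIV[OF P_smooth]])
      then have "DERIV (\<lambda>t. M t / P t ^ 2) t :> (deriv M t * P t ^ 2 - M t * (of_nat 2 * (deriv P t * P t ^ (2 - Suc 0)))) / (P t ^ 2 * P t ^ 2)"
        using P_pos[of t] by (intro DERIV_divide smooth_DERIV[OF M_smooth]) auto
      then have "DERIV (\<lambda>t. \<sigma> * (M t / P t ^ 2)) t :> \<sigma> * ((deriv M t * P t ^ 2 - M t * (of_nat 2 * (deriv P t * P t ^ (2 - Suc 0)))) / (P t ^ 2 * P t ^ 2))"
        by (rule DERIV_cmult)
      then show ?thesis unfolding \<phi>_def by (simp add: mult_ac)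
    qed
    have "deriv (\<lambda>s. (U s - (deriv ^^ 2) U s) / (U s) ^ 2) \<xi> = Dop \<phi> t"
      unfolding fun_eq chain_deriv[OF sm\<phi>] t_def ..
    also have "\<dots> = \<sigma> * ((deriv M t * P t ^ 2 - M t * (2 * P t * deriv P t)) / (P t ^ 2 * P t ^ 2)) * R t"
      unfolding Dop_def DERIV_imp_deriv[OF d\<phi>] ..
    finally have e3: "deriv (\<lambda>s. (U s - (deriv ^^ 2) U s) / (U s) ^ 2) \<xi> = \<dots>" .
    have dp: "DPx t = deriv P t * R t" using Dop_P unfolding Dop_def by metis
    have dm: "Dop M t = deriv M t * R t" unfolding Dop_def ..
    show "- c * (deriv U \<xi> - (deriv ^^ 3) U \<xi>) + deriv U \<xi> * (U \<xi> - (deriv ^^ 2) U \<xi>) / U \<xi> ^ 3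
        + deriv (\<lambda>s. (U s - (deriv ^^ 2) U s) / U s ^ 2) \<xi> = 0"
      unfolding e3 unfolding d1 d2 d3 unfolding U_def t_def[symmetric] dp dm
      by (rule tw_alg[OF s _ key[of t]]) (use P_pos[of t] in \<open>simp add: less_imp_neq[symmetric]\<close>)
  qed
  show ?thesis unfolding solitary_wave_def U_def[symmetric]
    using smooth nz lt lb peak tw fo by blast
qed

end

theorem mainTheorem7:
  fixes c b :: real
  assumes "c > 0" and "0 < b" and "b < 1"
  shows "\<exists>U. solitary_wave c b U \<and> solitary_wave c b (\<lambda>\<xi>. - U \<xi>)"
proof -
  define k where "k = b / sqrt 2"
  define A where "A = b * sqrt (2 - b^2) / sqrt c"
  have b2: "b^2 < 1" using assms by (simp add: power_less_one_iff abs_square_less_1)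
  have k2: "k^2 = b^2 / 2" unfolding k_def by (simp add: power_divide)
  have "wave c k A b"
  proof
    show "c > 0" using assms by simp
    show "0 < k" unfolding k_def using assms by simp
    show "k^2 < 1/2" unfolding k2 using b2 by simp
    show "A > 0" unfolding A_def using assms b2 by simp
    show "c * A^2 = 4 * k^2 * (1 - k^2)" unfolding A_def k2 using assms b2
      by (simp add: power_divide power_mult_distrib field_simps)
    show "b^2 = 2 * k^2" unfolding k2 by simp
  qed
  then interpret w: wave c k A b .
  have 1: "solitary_wave c b (\<lambda>\<xi>. 1 * w.P (w.h \<xi>))" by (rule w.U_wave) (simp_all add: A_def)
  have 2: "solitary_wave c b (\<lambda>\<xi>. (-1) * w.P (w.h \<xi>))" by (rule w.U_wave) (simp_all add: A_def)
  show ?thesis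
    by (rule exI[of _ "\<lambda>\<xi>. w.P (w.h \<xi>)"]) (use 1 2 in simp)
qed

end
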